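(* Let $V$ be a finite-dimensional real vector space with a linear action of $\mathbb H$, $\Lambda\subset V$ a lattice of maximal rank, and $W\subset V$ a real subspace. For $L\in\mathbb H$ with $L^2=-1$ let $W_{\mathbb Q,L}$ be the minimal rational $L$-invariant subspace of $V$ containing $W$, and $W_{\mathbb Q,\mathbb H}$ the minimal rational $\mathbb H$-invariant subspace of $V$ containing $W$. Then $W_{\mathbb Q,L}=W_{\mathbb Q,\mathbb H}$ for all such $L$ except for at most countably many.
   Context: A real subspace $U\subset V$ is rational if $\Lambda\cap U$ is a lattice of maximal rank in $U$. *)

theory Defs
  imports "HOL-Analysis.Analysis"
begin

text \<open>The real quaternion algebra H, as 4-tuples (a + b i + c j + d k).\<close>

datatype quat = Quat (qre: real) (qi: real) (qj: real) (qk: real)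

definition qone :: quat where "qone = Quat 1 0 0 0"

definition qadd :: "quat \<Rightarrow> quat \<Rightarrow> quat" where
  "qadd p q = Quat (qre p + qre q) (qi p + qi q) (qj p + qj q) (qk p + qk q)"

definition qscale :: "real \<Rightarrow> quat \<Rightarrow> quat" where
  "qscale r q = Quat (r * qre q) (r * qi q) (r * qj q) (r * qk q)"

definition qmult :: "quat \<Rightarrow> quat \<Rightarrow> quat" where
  "qmult p q = Quat
     (qre p * qre q - qi p * qi q - qj p * qj q - qk p * qk q)
     (qre p * qi q + qi p * qre q + qj p * qk q - qk p * qj q)
     (qre p * qj q - qi p * qk q + qj p * qre q + qk p * qi q)
     (qre p * qk q + qi p * qj q - qj p * qi q + qk p * qre q)"

definition quat_action :: "(quat \<Rightarrow> 'v::real_vector \<Rightarrow> 'v) \<Rightarrow> bool" where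
  "quat_action \<rho> \<longleftrightarrow>
     (\<forall>q. linear (\<rho> q)) \<and>
     \<rho> qone = id \<and>
     (\<forall>p q. \<rho> (qadd p q) = (\<lambda>v. \<rho> p v + \<rho> q v)) \<and>
     (\<forall>r q. \<rho> (qscale r q) = (\<lambda>v. r *\<^sub>R \<rho> q v)) \<and>
     (\<forall>p q. \<rho> (qmult p q) = \<rho> p \<circ> \<rho> q)"

definition int_span :: "'v::real_vector set \<Rightarrow> 'v set" where
  "int_span B = {v. \<exists>c :: 'v \<Rightarrow> int. v = (\<Sum>b\<in>B. of_int (c b) *\<^sub>R b)}"

definition full_lattice_in :: "'v::euclidean_space set \<Rightarrow> 'v set \<Rightarrow> bool" where
  "full_lattice_in \<Lambda> U \<longleftrightarrow>
     (\<exists>B. finite B \<and> B \<subseteq> U \<and> independent B \<and> span B = U \<and> \<Lambda> = int_span B)"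

definition rational_subspace :: "'v::euclidean_space set \<Rightarrow> 'v set \<Rightarrow> bool" where
  "rational_subspace \<Lambda> U \<longleftrightarrow> subspace U \<and> full_lattice_in (\<Lambda> \<inter> U) U"

definition W_QL :: "(quat \<Rightarrow> 'v \<Rightarrow> 'v) \<Rightarrow> 'v::euclidean_space set \<Rightarrow> quat \<Rightarrow> 'v set \<Rightarrow> 'v set" where
  "W_QL \<rho> \<Lambda> L W =
     \<Inter>{U. rational_subspace \<Lambda> U \<and> \<rho> L ` U \<subseteq> U \<and> W \<subseteq> U}"

definition W_QH :: "(quat \<Rightarrow> 'v \<Rightarrow> 'v) \<Rightarrow> 'v::euclidean_space set \<Rightarrow> 'v set \<Rightarrow> 'v set" where
  "W_QH \<rho> \<Lambda> W =
     \<Inter>{U. rational_subspace \<Lambda> U \<and> (\<forall>q. \<rho> q ` U \<subseteq> U) \<and> W \<subseteq> U}"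

end

theory Submission
  imports Defs
begin

lemma sq_neg1:
  assumes "qmult L L = qscale (-1) qone"
  shows "qre L = 0 \<and> (qi L)^2 + (qj L)^2 + (qk L)^2 = 1"
proof -
  obtain l0 l1 l2 l3 where L: "L = Quat l0 l1 l2 l3" by (cases L)
  from assms have e: "l0*l0 - l1*l1 - l2*l2 - l3*l3 = -1" "l0*l1 = 0" "l0*l2 = 0" "l0*l3=0"
    by (auto simp: L qmult_def qscale_def qone_def algebra_simps)
  have "l0 = 0"
  proof (rule ccontr)
    assume "l0 \<noteq> 0"
    with e have "l1 = 0" "l2 = 0" "l3 = 0" by auto
    with e have "l0*l0 = -1" by simp
    moreover have "l0*l0 \<ge> 0" by simp
    ultimately show False by linarith
  qed
  with e show ?thesis by (simp add: L power2_eq_square)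
qed

lemma decomp:
  fixes x p q :: quat
  defines "A \<equiv> (qi p)^2 + (qj p)^2 + (qk p)^2"
  defines "B \<equiv> (qi q)^2 + (qj q)^2 + (qk q)^2"
  defines "t \<equiv> qi p * qi q + qj p * qj q + qk p * qk q"
  defines "va \<equiv> qi x * qi p + qj x * qj p + qk x * qk p"
  defines "vb \<equiv> qi x * qi q + qj x * qj q + qk x * qk q"
  defines "vn \<equiv> qi x * (qj p * qk q - qk p * qj q) + qj x * (qk p * qi q - qi p * qk q) + qk x * (qi p * qj q - qj p * qi q)"
  defines "D \<equiv> A * B - t^2"
  assumes "qre p = 0" "qre q = 0" "D \<noteq> 0"
  shows "x = qscale (1/D) (qadd (qadd (qscale (D * qre x + vn * t) qone) (qscale (B * va - t * vb) p))
              (qadd (qscale (A * vb - t * va) q) (qscale vn (qmult p q))))"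
proof -
  obtain x0 x1 x2 x3 where x: "x = Quat x0 x1 x2 x3" by (cases x)
  obtain p1 p2 p3 where p: "p = Quat 0 p1 p2 p3" using assms(8) by (cases p) auto
  obtain q1 q2 q3 where q: "q = Quat 0 q1 q2 q3" using assms(9) by (cases q) auto
  have D: "D = (p1^2+p2^2+p3^2)*(q1^2+q2^2+q3^2) - (p1*q1+p2*q2+p3*q3)^2"
    by (simp add: D_def A_def B_def t_def p q)
  show ?thesis using assms(10) unfolding x p q qscale_def qadd_def qmult_def qone_def
    by (simp add: A_def B_def t_def va_def vb_def vn_def x p q D field_simps) (algebra)
qed

lemma D_nonzero:
  assumes "qre p = 0" "qre q = 0" "(qi p)^2 + (qj p)^2 + (qk p)^2 = 1"
    "(qi q)^2 + (qj q)^2 + (qk q)^2 = 1" "p \<noteq> q" "p \<noteq> qscale (-1) q"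
  shows "((qi p)^2 + (qj p)^2 + (qk p)^2) * ((qi q)^2 + (qj q)^2 + (qk q)^2)
     - (qi p * qi q + qj p * qj q + qk p * qk q)^2 \<noteq> 0"
proof
  obtain p1 p2 p3 where p: "p = Quat 0 p1 p2 p3" using assms(1) by (cases p) auto
  obtain q1 q2 q3 where q: "q = Quat 0 q1 q2 q3" using assms(2) by (cases q) auto
  define t where "t = p1*q1+p2*q2+p3*q3"
  assume "((qi p)^2 + (qj p)^2 + (qk p)^2) * ((qi q)^2 + (qj q)^2 + (qk q)^2)
     - (qi p * qi q + qj p * qj q + qk p * qk q)^2 = 0"
  hence "t^2 = 1" using assms(3,4) by (simp add: p q t_def)
  hence "t = 1 \<or> t = -1" by (simp add: power2_eq_1_iff)
  thus False
  proof
    assume "t = 1"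
    hence "(p1-q1)^2 + (p2-q2)^2 + (p3-q3)^2 = 0" using assms(3,4)
      by (simp add: p q t_def power2_eq_square algebra_simps)
    hence "p1 = q1" "p2 = q2" "p3 = q3" by (smt (verit) zero_le_power2 power_zero_numeral power2_eq_iff)+
    thus False using assms(5) p q by simp
  next
    assume "t = -1"
    hence "(p1+q1)^2 + (p2+q2)^2 + (p3+q3)^2 = 0" using assms(3,4)
      by (simp add: p q t_def power2_eq_square algebra_simps)
    hence "p1 = -q1" "p2 = -q2" "p3 = -q3" by (smt (verit) zero_le_power2 power_zero_numeral power2_eq_iff)+
    thus False using assms(6) p q by (simp add: qscale_def)
  qed
qed

lemma two_inv_all:
  assumes act: "quat_action \<rho>" and U: "subspace U"
    and p2: "qmult p p = qscale (-1) qone" and q2: "qmult q q = qscale (-1) qone"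
    and pU: "\<rho> p ` U \<subseteq> U" and qU: "\<rho> q ` U \<subseteq> U"
    and ne: "p \<noteq> q" "p \<noteq> qscale (-1) q"
  shows "\<rho> x ` U \<subseteq> U"
proof -
  note P = sq_neg1[OF p2] and Q = sq_neg1[OF q2]
  define A where "A \<equiv> (qi p)^2 + (qj p)^2 + (qk p)^2"
  define B where "B \<equiv> (qi q)^2 + (qj q)^2 + (qk q)^2"
  define t where "t \<equiv> qi p * qi q + qj p * qj q + qk p * qk q"
  define va where "va \<equiv> qi x * qi p + qj x * qj p + qk x * qk p"
  define vb where "vb \<equiv> qi x * qi q + qj x * qj q + qk x * qk q"
  define vn where "vn \<equiv> qi x * (qj p * qk q - qk p * qj q) + qj x * (qk p * qi q - qi p * qk q) + qk x * (qi p * qj q - qj p * qi q)"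
  define D where "D \<equiv> A * B - t^2"
  have D0: "D \<noteq> 0" unfolding D_def A_def B_def t_def
    using D_nonzero[OF conjunct1[OF P] conjunct1[OF Q] conjunct2[OF P] conjunct2[OF Q] ne] .
  have xe: "x = qscale (1/D) (qadd (qadd (qscale (D * qre x + vn * t) qone) (qscale (B * va - t * vb) p))
              (qadd (qscale (A * vb - t * va) q) (qscale vn (qmult p q))))"
    unfolding A_def B_def t_def va_def vb_def vn_def D_def
    by (rule decomp) (use P Q D0 in \<open>simp_all add: A_def B_def t_def D_def\<close>)
  from act have r1: "\<rho> qone = id" and ra: "\<And>p q. \<rho> (qadd p q) = (\<lambda>v. \<rho> p v + \<rho> q v)"
    and rs: "\<And>r q. \<rho> (qscale r q) = (\<lambda>v. r *\<^sub>R \<rho> q v)"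
    and rm: "\<And>p q. \<rho> (qmult p q) = \<rho> p \<circ> \<rho> q"
    unfolding quat_action_def by auto
  show ?thesis
  proof
    fix y assume "y \<in> \<rho> x ` U"
    then obtain u where u: "u \<in> U" "y = \<rho> x u" by auto
    have "\<rho> p u \<in> U" "\<rho> q u \<in> U" using u pU qU by auto
    moreover have "\<rho> p (\<rho> q u) \<in> U" using \<open>\<rho> q u \<in> U\<close> pU by auto
    ultimately have "(1/D) *\<^sub>R ((D * qre x + vn * t) *\<^sub>R u + (B * va - t * vb) *\<^sub>R \<rho> p u
        + ((A * vb - t * va) *\<^sub>R \<rho> q u + vn *\<^sub>R \<rho> p (\<rho> q u))) \<in> U"
      using U u(1) by (intro subspace_add subspace_scale; simp)+
    moreover have "y = (1/D) *\<^sub>R ((D * qre x + vn * t) *\<^sub>R u + (B * va - t * vb) *\<^sub>R \<rho> p u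
        + ((A * vb - t * va) *\<^sub>R \<rho> q u + vn *\<^sub>R \<rho> p (\<rho> q u)))"
      using u(2) by (subst (asm) xe) (simp add: ra rs rm r1)
    ultimately show "y \<in> U" by simp
  qed
qed

lemma subset_int_span: "finite B \<Longrightarrow> B \<subseteq> int_span B"
proof
  fix b assume "finite B" "b \<in> B"
  have "(\<Sum>b'\<in>B. of_int (if b' = b then 1 else 0) *\<^sub>R b') = (\<Sum>b'\<in>B. if b' = b then b' else 0)"
    by (rule sum.cong) auto
  also have "\<dots> = b" using \<open>finite B\<close> \<open>b \<in> B\<close> by (simp add: sum.delta')
  finally show "b \<in> int_span B" unfolding int_span_def by (intro CollectI exI[of _ "\<lambda>b'. if b' = b then 1 else 0"]) simp
qed

lemma countable_int_span: "finite B \<Longrightarrow> countable (int_span B)"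
proof -
  assume fin: "finite B"
  have "int_span B \<subseteq> (\<lambda>c. \<Sum>b\<in>B. of_int (c b) *\<^sub>R b) ` (B \<rightarrow>\<^sub>E (UNIV :: int set))"
  proof
    fix v assume "v \<in> int_span B"
    then obtain c :: "_ \<Rightarrow> int" where c: "v = (\<Sum>b\<in>B. of_int (c b) *\<^sub>R b)" unfolding int_span_def by auto
    have "v = (\<Sum>b\<in>B. of_int (restrict c B b) *\<^sub>R b)" unfolding c by (rule sum.cong) auto
    moreover have "restrict c B \<in> B \<rightarrow>\<^sub>E UNIV" by auto
    ultimately show "v \<in> (\<lambda>c. \<Sum>b\<in>B. of_int (c b) *\<^sub>R b) ` (B \<rightarrow>\<^sub>E (UNIV :: int set))" by blast
  qed
  moreover have "countable (B \<rightarrow>\<^sub>E (UNIV :: int set))" using fin by (intro countable_PiE) auto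
  ultimately show ?thesis by (meson countable_image countable_subset)
qed

theorem lemma3p4:
  fixes \<rho> :: "quat \<Rightarrow> 'v::euclidean_space \<Rightarrow> 'v"
    and \<Lambda> W :: "'v set"
  assumes "quat_action \<rho>"
    and "full_lattice_in \<Lambda> (UNIV :: 'v set)"
    and "subspace W"
  shows "countable {L. qmult L L = qscale (-1) qone \<and> W_QL \<rho> \<Lambda> L W \<noteq> W_QH \<rho> \<Lambda> W}"
proof -
  define R where "R = span ` {B. finite B \<and> B \<subseteq> \<Lambda>}"
  define S where "S = (\<lambda>U. {L. qmult L L = qscale (-1) qone \<and> \<rho> L ` U \<subseteq> U})"
  define I where "I = {U \<in> R. \<not> (\<forall>q. \<rho> q ` U \<subseteq> U)}"
  have cL: "countable \<Lambda>" using assms(2) countable_int_span unfolding full_lattice_in_def by blast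
  have cR: "countable R" unfolding R_def using countable_Collect_finite_subset[OF cL] by simp
  have cS: "countable (S U)" if "U \<in> I" for U
  proof (cases "S U = {}")
    case True then show ?thesis by simp
  next
    case False
    then obtain p where p: "p \<in> S U" by auto
    have "S U \<subseteq> {p, qscale (-1) p}"
    proof
      fix q assume q: "q \<in> S U"
      show "q \<in> {p, qscale (-1) p}"
      proof (rule ccontr)
        assume nq: "q \<notin> {p, qscale (-1) p}"
        have "qscale (-1) (qscale (-1) q) = q" by (cases q) (simp add: qscale_def)
        hence ne: "p \<noteq> q" "p \<noteq> qscale (-1) q" using nq by auto
        from that obtain B where U: "U = span B" and "\<not> (\<forall>x. \<rho> x ` U \<subseteq> U)" unfolding I_def R_def by auto
        moreover have "\<rho> x ` U \<subseteq> U" for x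
          by (rule two_inv_all[OF assms(1) _ _ _ _ _ ne]) (use p q U in \<open>auto simp: S_def\<close>)
        ultimately show False by blast
      qed
    qed
    then show ?thesis by (rule countable_subset) simp
  qed
  have "{L. qmult L L = qscale (-1) qone \<and> W_QL \<rho> \<Lambda> L W \<noteq> W_QH \<rho> \<Lambda> W} \<subseteq> (\<Union>U\<in>I. S U)"
  proof
    fix L assume "L \<in> {L. qmult L L = qscale (-1) qone \<and> W_QL \<rho> \<Lambda> L W \<noteq> W_QH \<rho> \<Lambda> W}"
    hence L2: "qmult L L = qscale (-1) qone" and neq: "W_QL \<rho> \<Lambda> L W \<noteq> W_QH \<rho> \<Lambda> W" by auto
    have "W_QL \<rho> \<Lambda> L W \<subseteq> W_QH \<rho> \<Lambda> W" unfolding W_QL_def W_QH_def by blast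
    with neq obtain x where x: "x \<in> W_QH \<rho> \<Lambda> W" "x \<notin> W_QL \<rho> \<Lambda> L W" by blast
    then obtain U where U: "rational_subspace \<Lambda> U" "\<rho> L ` U \<subseteq> U" "W \<subseteq> U" "x \<notin> U"
      unfolding W_QL_def by auto
    have notH: "\<not> (\<forall>q. \<rho> q ` U \<subseteq> U)"
    proof
      assume "\<forall>q. \<rho> q ` U \<subseteq> U"
      with U have "x \<in> U" using x(1) unfolding W_QH_def by blast
      with U(4) show False by simp
    qed
    from U(1) obtain B where B: "finite B" "B \<subseteq> U" "span B = U" "\<Lambda> \<inter> U = int_span B"
      unfolding rational_subspace_def full_lattice_in_def by auto
    have "B \<subseteq> \<Lambda>" using subset_int_span[OF B(1)] B(4) by blast
    hence "U \<in> R" unfolding R_def using B by blast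
    with notH have "U \<in> I" unfolding I_def by blast
    moreover have "L \<in> S U" unfolding S_def using L2 U(2) by blast
    ultimately show "L \<in> (\<Union>U\<in>I. S U)" by blast
  qed
  moreover have "countable (\<Union>U\<in>I. S U)"
    using cS cR by (intro countable_UN) (auto simp: I_def intro: countable_subset)
  ultimately show ?thesis by (rule countable_subset)
qed
end
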